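(* Let $\vartheta$ be a primitive semi-compatible random substitution. Then for all $1\leqslant i\leqslant n$, \[ \frac{1}{\lambda}\bm q_1^\intercal\bm R\;\leqslant\;\underline s_i^I\;\leqslant\;\overline s_i^I\;\leqslant\;\frac{1}{\lambda-1}\bm q_1^\intercal\bm R . \] The lower bound is an equality if the identical set condition holds, and the upper bound is an equality if the disjoint set condition holds. Moreover, $\frac{1}{\lambda^r}\bm q_r^\intercal\bm R\leqslant\underline s_i^I$ for every $r\in\mathbb N$, and $r\mapsto\frac{1}{\lambda^r}\bm q_r^\intercal\bm R$ is monotonically non-decreasing.
   Context: Let $\mathcal A=\{a_1,\dots,a_n\}$ be a finite alphabet, $\mathcal A^+$ the finite non-empty words over $\mathcal A$. A random substitution is a map $\vartheta$ from $\mathcal A$ to finite non-empty subsets of $\mathcal A^+$, extended to words by $\vartheta(u_1\cdots u_m)=\{w_1\cdots w_m: w_k\in\vartheta(u_k)\}$ and to sets of words by taking unions; powers $\vartheta^m$ are compositions. $|u|_a$ is the number of occurrences of letter $a$ in $u$, $\Phi(u)=(|u|_{a_1},\dots,|u|_{a_n})^\intercal$. $\vartheta$ is semi-compatible if for each $a$ all words in $\vartheta(a)$ have the same $\Phi$; then all words in $\vartheta^m(a_i)$ have a common length $\ell_{m,i}$. The substitution matrix is $M_{ij}=|u|_{a_i}$, $u\in\vartheta(a_j)$; $\vartheta$ is primitive if $M$ is a primitive matrix, $\lambda$ denotes its Perron–Frobenius eigenvalue and $\bm R,\bm L$ its right and left PF eigenvectors normalised by $\|\bm R\|_1=1=\bm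 L^\intercal\bm R$. Set $q_{m,i}=\log(\#\vartheta^m(a_i))$, $\bm q_m=(q_{m,1},\dots,q_{m,n})^\intercal$. The lower and upper inflation word entropies of type $i$ are $\underline s_i^I=\liminf_{m\to\infty} q_{m,i}/\ell_{m,i}$ and $\overline s_i^I=\limsup_{m\to\infty}q_{m,i}/\ell_{m,i}$. Identical set condition: for all $i$, $m\in\mathbb N$, $u,v\in\vartheta(a_i)$: $\vartheta^m(u)=\vartheta^m(v)$. Disjoint set condition: for all $i$, $m\in\mathbb N$, $u\neq v\in\vartheta(a_i)$: $\vartheta^m(u)\cap\vartheta^m(v)=\varnothing$. *)

theory Defs
  imports Complex_Main "HOL-Library.Liminf_Limsup" "HOL-Library.Extended_Real"
begin

definition random_subst :: "('a \<Rightarrow> 'a list set) \<Rightarrow> bool" where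
  "random_subst \<theta> \<longleftrightarrow> (\<forall>a. finite (\<theta> a) \<and> \<theta> a \<noteq> {} \<and> (\<forall>w\<in>\<theta> a. w \<noteq> []))"

fun subst_word :: "('a \<Rightarrow> 'a list set) \<Rightarrow> 'a list \<Rightarrow> 'a list set" where
  "subst_word \<theta> [] = {[]}"
| "subst_word \<theta> (a # u) = {w @ v | w v. w \<in> \<theta> a \<and> v \<in> subst_word \<theta> u}"

definition subst_set :: "('a \<Rightarrow> 'a list set) \<Rightarrow> 'a list set \<Rightarrow> 'a list set" where
  "subst_set \<theta> S = (\<Union>u\<in>S. subst_word \<theta> u)"

definition subst_pow_word :: "('a \<Rightarrow> 'a list set) \<Rightarrow> nat \<Rightarrow> 'a list \<Rightarrow> 'a list set" where
  "subst_pow_word \<theta> m u = (subst_set \<theta> ^^ m) {u}"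

definition subst_pow :: "('a \<Rightarrow> 'a list set) \<Rightarrow> nat \<Rightarrow> 'a \<Rightarrow> 'a list set" where
  "subst_pow \<theta> m a = subst_pow_word \<theta> m [a]"

definition semi_compatible :: "('a \<Rightarrow> 'a list set) \<Rightarrow> bool" where
  "semi_compatible \<theta> \<longleftrightarrow>
     (\<forall>a. \<forall>u\<in>\<theta> a. \<forall>v\<in>\<theta> a. \<forall>b. count_list u b = count_list v b)"

definition subst_matrix :: "('a \<Rightarrow> 'a list set) \<Rightarrow> 'a \<Rightarrow> 'a \<Rightarrow> real" where
  "subst_matrix \<theta> i j = real (count_list (SOME u. u \<in> \<theta> j) i)"

fun mat_pow :: "('a::finite \<Rightarrow> 'a \<Rightarrow> real) \<Rightarrow> nat \<Rightarrow> 'a \<Rightarrow> 'a \<Rightarrow> real" where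
  "mat_pow M 0 = (\<lambda>i j. if i = j then 1 else 0)"
| "mat_pow M (Suc k) = (\<lambda>i j. \<Sum>l\<in>UNIV. mat_pow M k i l * M l j)"

definition primitive_matrix :: "('a::finite \<Rightarrow> 'a \<Rightarrow> real) \<Rightarrow> bool" where
  "primitive_matrix M \<longleftrightarrow> (\<forall>i j. M i j \<ge> 0) \<and> (\<exists>k\<ge>1. \<forall>i j. mat_pow M k i j > 0)"

definition primitive_subst :: "('a::finite \<Rightarrow> 'a list set) \<Rightarrow> bool" where
  "primitive_subst \<theta> \<longleftrightarrow> primitive_matrix (subst_matrix \<theta>)"

text \<open>lambda is the Perron-Frobenius eigenvalue and R the right PF eigenvector,
  normalised with ||R||_1 = 1. For a primitive matrix these are uniquely
  determined by: R strictly positive, M R = lambda R, sum R = 1.\<close>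
definition PF_right :: "('a::finite \<Rightarrow> 'a \<Rightarrow> real) \<Rightarrow> real \<Rightarrow> ('a \<Rightarrow> real) \<Rightarrow> bool" where
  "PF_right M lam R \<longleftrightarrow> (\<forall>i. R i > 0) \<and> (\<forall>i. (\<Sum>j\<in>UNIV. M i j * R j) = lam * R i)
      \<and> (\<Sum>i\<in>UNIV. R i) = 1"

definition ell :: "('a \<Rightarrow> 'a list set) \<Rightarrow> nat \<Rightarrow> 'a \<Rightarrow> nat" where
  "ell \<theta> m a = length (SOME w. w \<in> subst_pow \<theta> m a)"

definition qv :: "('a \<Rightarrow> 'a list set) \<Rightarrow> nat \<Rightarrow> 'a \<Rightarrow> real" where
  "qv \<theta> m a = ln (real (card (subst_pow \<theta> m a)))"

definition lower_infl_entropy :: "('a \<Rightarrow> 'a list set) \<Rightarrow> 'a \<Rightarrow> ereal" where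
  "lower_infl_entropy \<theta> a = liminf (\<lambda>m. ereal (qv \<theta> m a / real (ell \<theta> m a)))"

definition upper_infl_entropy :: "('a \<Rightarrow> 'a list set) \<Rightarrow> 'a \<Rightarrow> ereal" where
  "upper_infl_entropy \<theta> a = limsup (\<lambda>m. ereal (qv \<theta> m a / real (ell \<theta> m a)))"

definition identical_set_condition :: "('a \<Rightarrow> 'a list set) \<Rightarrow> bool" where
  "identical_set_condition \<theta> \<longleftrightarrow>
     (\<forall>a m. m \<ge> 1 \<longrightarrow> (\<forall>u\<in>\<theta> a. \<forall>v\<in>\<theta> a. subst_pow_word \<theta> m u = subst_pow_word \<theta> m v))"

definition disjoint_set_condition :: "('a \<Rightarrow> 'a list set) \<Rightarrow> bool" where
  "disjoint_set_condition \<theta> \<longleftrightarrow>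
     (\<forall>a m. m \<ge> 1 \<longrightarrow> (\<forall>u\<in>\<theta> a. \<forall>v\<in>\<theta> a. u \<noteq> v \<longrightarrow>
         subst_pow_word \<theta> m u \<inter> subst_pow_word \<theta> m v = {}))"

end

theory Submission
  imports Defs
begin


lemma contr_seq:
  fixes e d :: "nat \<Rightarrow> real"
  assumes "0 \<le> \<rho>" "\<rho> < 1" "\<And>m. \<bar>e (Suc m)\<bar> \<le> \<rho> * \<bar>e m\<bar> + \<bar>d m\<bar>" "d \<longlonglongrightarrow> 0"
  shows "e \<longlonglongrightarrow> 0"
proof (rule LIMSEQ_I)
  fix r :: real assume r: "r > 0"
  define \<delta> where "\<delta> = r * (1 - \<rho>) / 2"
  have \<delta>: "\<delta> > 0" using r assms(2) by (simp add: \<delta>_def)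
  obtain N where N: "\<And>n. n \<ge> N \<Longrightarrow> \<bar>d n\<bar> < \<delta>"
    using LIMSEQ_D[OF assms(4) \<delta>] by auto
  have claim: "\<bar>e (N + j)\<bar> \<le> \<rho> ^ j * \<bar>e N\<bar> + r / 2" for j
  proof (induction j)
    case 0 then show ?case using r by simp
  next
    case (Suc j)
    have "\<bar>e (N + Suc j)\<bar> \<le> \<rho> * \<bar>e (N + j)\<bar> + \<bar>d (N + j)\<bar>" using assms(3)[of "N + j"] by simp
    also have "\<dots> \<le> \<rho> * (\<rho> ^ j * \<bar>e N\<bar> + r / 2) + \<delta>"
      using Suc N[of "N + j"] assms(1) by (intro add_mono mult_left_mono) auto
    also have "\<rho> * r / 2 + \<delta> = r / 2" unfolding \<delta>_def by (simp add: field_simps)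
    then have "\<rho> * (\<rho> ^ j * \<bar>e N\<bar> + r / 2) + \<delta> = \<rho> ^ Suc j * \<bar>e N\<bar> + r / 2"
      by (simp add: algebra_simps)
    finally show ?case by simp
  qed
  have "(\<lambda>j. \<rho> ^ j * \<bar>e N\<bar>) \<longlonglongrightarrow> 0"
    using LIMSEQ_power_zero[of \<rho>] assms(1,2) by (intro tendsto_mult_left_zero) auto
  from LIMSEQ_D[OF this, of "r/2"] r obtain J where J: "\<And>j. j \<ge> J \<Longrightarrow> \<bar>\<rho> ^ j * \<bar>e N\<bar>\<bar> < r / 2"
    by auto
  show "\<exists>no. \<forall>n\<ge>no. norm (e n - 0) < r"
  proof (intro exI allI impI)
    fix n assume n: "n \<ge> N + J"
    define j where "j = n - N"
    have j: "n = N + j" "j \<ge> J" using n by (auto simp: j_def)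
    have "\<bar>e n\<bar> \<le> \<rho> ^ j * \<bar>e N\<bar> + r / 2" using claim j by simp
    also have "\<dots> < r" using J[OF j(2)] by simp
    finally show "norm (e n - 0) < r" by simp
  qed
qed

lemma geom_weighted:
  fixes z :: "nat \<Rightarrow> real"
  assumes z: "z \<longlonglongrightarrow> L" and lam: "lam > 1"
  shows "(\<lambda>m. (\<Sum>s<m. z s * lam ^ s) / lam ^ m) \<longlonglongrightarrow> L / (lam - 1)"
proof -
  define a where "a m = (\<Sum>s<m. z s * lam ^ s) / lam ^ m" for m
  define e where "e m = a m - L / (lam - 1)" for m
  have rec: "e (Suc m) = e m / lam + (z m - L) / lam" for m
  proof -
    have "a (Suc m) = (a m + z m) / lam"
      unfolding a_def using lam by (simp add: field_simps)
    then show ?thesis unfolding e_def using lam by (simp add: field_simps)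
  qed
  have "e \<longlonglongrightarrow> 0"
  proof (rule contr_seq[where \<rho> = "1 / lam" and d = "\<lambda>m. (z m - L) / lam"])
    show "0 \<le> 1 / lam" "1 / lam < 1" using lam by auto
    show "\<bar>e (Suc m)\<bar> \<le> 1 / lam * \<bar>e m\<bar> + \<bar>(z m - L) / lam\<bar>" for m
      unfolding rec using lam abs_triangle_ineq[of "e m / lam" "(z m - L) / lam"] by (simp add: abs_divide)
    have "(\<lambda>m. z m - L) \<longlonglongrightarrow> 0" using z by (simp add: LIMSEQ_iff)
    then show "(\<lambda>m. (z m - L) / lam) \<longlonglongrightarrow> 0" by (intro tendsto_divide_zero)
  qed
  then have "(\<lambda>m. e m + L / (lam - 1)) \<longlonglongrightarrow> 0 + L / (lam - 1)" by (intro tendsto_add) auto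
  then show ?thesis by (simp add: e_def a_def)
qed

lemma stoch_bounds:
  fixes W :: "'a::finite \<Rightarrow> real" and y :: "'a \<Rightarrow> real"
  assumes "\<And>l. W l \<ge> 0" "(\<Sum>l\<in>UNIV. W l) = 1"
  shows "Min (range y) \<le> (\<Sum>l\<in>UNIV. W l * y l)" "(\<Sum>l\<in>UNIV. W l * y l) \<le> Max (range y)"
proof -
  have "(\<Sum>l\<in>UNIV. W l * Min (range y)) \<le> (\<Sum>l\<in>UNIV. W l * y l)"
    by (rule sum_mono, rule mult_left_mono) (auto simp: assms)
  then show "Min (range y) \<le> (\<Sum>l\<in>UNIV. W l * y l)" by (simp add: sum_distrib_right[symmetric] assms)
  have "(\<Sum>l\<in>UNIV. W l * y l) \<le> (\<Sum>l\<in>UNIV. W l * Max (range y))"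
    by (rule sum_mono, rule mult_left_mono) (auto simp: assms)
  then show "(\<Sum>l\<in>UNIV. W l * y l) \<le> Max (range y)" by (simp add: sum_distrib_right[symmetric] assms)
qed

lemma stoch_contract:
  fixes W :: "'a::finite \<Rightarrow> real" and y :: "'a \<Rightarrow> real"
  assumes "\<And>l. W l \<ge> \<epsilon>" "\<epsilon> \<ge> 0" "(\<Sum>l\<in>UNIV. W l) = 1"
  shows "(\<Sum>l\<in>UNIV. W l * y l) \<le> \<epsilon> * Min (range y) + (1 - \<epsilon>) * Max (range y)"
proof -
  obtain l0 where l0: "y l0 = Min (range y)"
    by (metis (mono_tags, lifting) Min_in finite_UNIV finite_imageI imageE image_is_empty UNIV_not_empty)
  have nn: "\<And>l. W l * (Max (range y) - y l) \<ge> 0"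
    using assms by (intro mult_nonneg_nonneg) (auto intro: order_trans)
  have "\<epsilon> * (Max (range y) - Min (range y)) \<le> W l0 * (Max (range y) - y l0)"
    unfolding l0 by (rule mult_right_mono) (auto simp: assms)
  also have "\<dots> \<le> (\<Sum>l\<in>UNIV. W l * (Max (range y) - y l))"
    by (rule member_le_sum) (auto simp: nn)
  also have "\<dots> = Max (range y) - (\<Sum>l\<in>UNIV. W l * y l)"
    by (simp add: right_diff_distrib sum_subtractf sum_distrib_right[symmetric] assms)
  finally show ?thesis by (simp add: algebra_simps)
qed




definition conc :: "'a list set \<Rightarrow> 'a list set \<Rightarrow> 'a list set" where
  "conc A B = {x @ y | x y. x \<in> A \<and> y \<in> B}"

lemma sw_append: "subst_word \<theta> (u @ v) = conc (subst_word \<theta> u) (subst_word \<theta> v)"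
proof (induction u)
  case Nil then show ?case by (auto simp: conc_def)
next
  case (Cons a u)
  show ?case
    unfolding conc_def append_Cons subst_word.simps Cons
    by (auto simp: conc_def) (metis append.assoc)+
qed

lemma subst_set_conc: "subst_set \<theta> (conc A B) = conc (subst_set \<theta> A) (subst_set \<theta> B)"
proof
  show "subst_set \<theta> (conc A B) \<subseteq> conc (subst_set \<theta> A) (subst_set \<theta> B)"
  proof
    fix w assume "w \<in> subst_set \<theta> (conc A B)"
    then obtain x y where xy: "x \<in> A" "y \<in> B" "w \<in> subst_word \<theta> (x @ y)"
      unfolding subst_set_def conc_def by blast
    then have "w \<in> conc (subst_word \<theta> x) (subst_word \<theta> y)" by (simp add: sw_append)
    then obtain x' y' where "w = x' @ y'" "x' \<in> subst_word \<theta> x" "y' \<in> subst_word \<theta> y"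
      unfolding conc_def by blast
    then show "w \<in> conc (subst_set \<theta> A) (subst_set \<theta> B)"
      unfolding conc_def subst_set_def using xy by blast
  qed
next
  show "conc (subst_set \<theta> A) (subst_set \<theta> B) \<subseteq> subst_set \<theta> (conc A B)"
  proof
    fix w assume "w \<in> conc (subst_set \<theta> A) (subst_set \<theta> B)"
    then obtain x y x' y' where "w = x' @ y'" "x \<in> A" "y \<in> B" "x' \<in> subst_word \<theta> x" "y' \<in> subst_word \<theta> y"
      unfolding subst_set_def conc_def by blast
    then have "w \<in> conc (subst_word \<theta> x) (subst_word \<theta> y)" unfolding conc_def by blast
    then have "w \<in> subst_word \<theta> (x @ y)" by (simp add: sw_append)
    moreover have "x @ y \<in> conc A B" using \<open>x \<in> A\<close> \<open>y \<in> B\<close> unfolding conc_def by blast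
    ultimately show "w \<in> subst_set \<theta> (conc A B)" unfolding subst_set_def by blast
  qed
qed

lemma funpow_conc: "(subst_set \<theta> ^^ m) (conc A B) = conc ((subst_set \<theta> ^^ m) A) ((subst_set \<theta> ^^ m) B)"
  by (induction m) (auto simp: subst_set_conc)

lemma spw_append: "subst_pow_word \<theta> m (u @ v) = conc (subst_pow_word \<theta> m u) (subst_pow_word \<theta> m v)"
proof -
  have "{u @ v} = conc {u} {v}" by (auto simp: conc_def)
  then show ?thesis unfolding subst_pow_word_def by (simp add: funpow_conc)
qed

lemma subst_set_UN: "subst_set \<theta> (\<Union>x\<in>I. S x) = (\<Union>x\<in>I. subst_set \<theta> (S x))"
  unfolding subst_set_def by blast

lemma funpow_UN: "(subst_set \<theta> ^^ m) S = (\<Union>u\<in>S. subst_pow_word \<theta> m u)"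
proof (induction m)
  case 0 then show ?case by (simp add: subst_pow_word_def)
next
  case (Suc m)
  have "(subst_set \<theta> ^^ Suc m) S = subst_set \<theta> ((subst_set \<theta> ^^ m) S)" by simp
  also have "\<dots> = (\<Union>u\<in>S. subst_set \<theta> (subst_pow_word \<theta> m u))" by (simp add: Suc subst_set_UN)
  finally show ?case by (simp add: subst_pow_word_def)
qed

lemma spw_Suc: "subst_pow_word \<theta> (Suc m) u = (\<Union>v\<in>subst_word \<theta> u. subst_pow_word \<theta> m v)"
proof -
  have "subst_pow_word \<theta> (Suc m) u = (subst_set \<theta> ^^ m) (subst_set \<theta> {u})"
    unfolding subst_pow_word_def by (simp add: funpow_Suc_right del: funpow.simps)
  also have "subst_set \<theta> {u} = subst_word \<theta> u" by (simp add: subst_set_def)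
  finally show ?thesis by (simp add: funpow_UN)
qed

lemma sw_single: "subst_word \<theta> [a] = \<theta> a" by auto

lemma spw_Suc_single: "subst_pow \<theta> (Suc m) a = (\<Union>v\<in>\<theta> a. subst_pow_word \<theta> m v)"
  unfolding subst_pow_def by (simp add: spw_Suc sw_single)

lemma spw_0[simp]: "subst_pow_word \<theta> 0 u = {u}" by (simp add: subst_pow_word_def)

lemma spw_Nil[simp]: "subst_pow_word \<theta> m [] = {[]}"
  by (induction m) (auto simp: spw_Suc)

lemma finite_conc: "finite A \<Longrightarrow> finite B \<Longrightarrow> finite (conc A B)"
proof -
  assume "finite A" "finite B"
  have "conc A B = (\<lambda>(x,y). x @ y) ` (A \<times> B)" by (auto simp: conc_def)
  then show ?thesis using \<open>finite A\<close> \<open>finite B\<close> by simp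
qed

lemma card_conc:
  assumes "finite A" "finite B" "\<And>x x'. x \<in> A \<Longrightarrow> x' \<in> A \<Longrightarrow> length x = length x'"
  shows "card (conc A B) = card A * card B"
proof -
  have e: "conc A B = (\<lambda>(x,y). x @ y) ` (A \<times> B)" by (auto simp: conc_def)
  have "inj_on (\<lambda>(x,y). x @ y) (A \<times> B)"
  proof (rule inj_onI, clarsimp)
    fix x y x' y' assume "x \<in> A" "y \<in> B" "x' \<in> A" "y' \<in> B" "x @ y = x' @ y'"
    moreover have "length x = length x'" using assms(3) \<open>x \<in> A\<close> \<open>x' \<in> A\<close> .
    ultimately show "x = x' \<and> y = y'" by simp
  qed
  then show ?thesis unfolding e by (simp add: card_image card_cartesian_product)
qed

locale rs =
  fixes \<theta> :: "'a::finite \<Rightarrow> 'a list set" and lam :: real and R :: "'a \<Rightarrow> real"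
  assumes rsub: "random_subst \<theta>" and sc: "semi_compatible \<theta>"
    and prim: "primitive_subst \<theta>" and pf: "PF_right (subst_matrix \<theta>) lam R"
begin

abbreviation "M \<equiv> subst_matrix \<theta>"
abbreviation "P \<equiv> mat_pow M"

lemma th_fin: "finite (\<theta> a)" using rsub by (simp add: random_subst_def)
lemma th_ne: "\<theta> a \<noteq> {}" using rsub by (simp add: random_subst_def)
lemma th_nonnil: "w \<in> \<theta> a \<Longrightarrow> w \<noteq> []" using rsub by (simp add: random_subst_def)

lemma count_th: "u \<in> \<theta> a \<Longrightarrow> count_list u b = M b a"
proof -
  assume u: "u \<in> \<theta> a"
  have "(SOME u. u \<in> \<theta> a) \<in> \<theta> a" using th_ne by (simp add: some_in_eq)
  then show ?thesis using u sc unfolding semi_compatible_def subst_matrix_def by metis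
qed

lemma sum_count_Cons: "(\<Sum>c\<in>(UNIV::'a set). real (count_list (a # u) c) * f c) = f a + (\<Sum>c\<in>UNIV. real (count_list u c) * f c)"
proof -
  have "(\<Sum>c\<in>UNIV. real (count_list (a # u) c) * f c) = (\<Sum>c\<in>UNIV. (if c = a then f c else 0) + real (count_list u c) * f c)"
    by (rule sum.cong) (auto simp: algebra_simps)
  also have "\<dots> = f a + (\<Sum>c\<in>UNIV. real (count_list u c) * f c)" by (simp add: sum.distrib sum.delta)
  finally show ?thesis .
qed

lemma sum_delta_r: "(\<Sum>c\<in>(UNIV::'a set). f c * (if b = c then 1 else 0)) = (f b::real)"
proof -
  have "(\<Sum>c\<in>(UNIV::'a set). f c * (if b = c then 1 else 0)) = (\<Sum>c\<in>UNIV. if b = c then f c else 0)"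
    by (rule sum.cong) auto
  then show ?thesis by simp
qed

lemma sum_delta_l: "(\<Sum>c\<in>(UNIV::'a set). (if b = c then 1 else 0) * f c) = (f b::real)"
  using sum_delta_r[of f b] by (simp add: mult.commute)

lemma sum_delta_r2: "(\<Sum>c\<in>(UNIV::'a set). f c * (if c = b then 1 else 0)) = (f b::real)"
proof -
  have "(\<Sum>c\<in>(UNIV::'a set). f c * (if c = b then 1 else 0)) = (\<Sum>c\<in>UNIV. if c = b then f c else 0)"
    by (rule sum.cong) auto
  then show ?thesis by simp
qed

lemma sum_delta_l2: "(\<Sum>c\<in>(UNIV::'a set). (if c = b then 1 else 0) * f c) = (f b::real)"
  using sum_delta_r2[of f b] by (simp add: mult.commute)

lemmas sum_deltas = sum_delta_r sum_delta_l sum_delta_r2 sum_delta_l2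

lemma M_nonneg: "M i j \<ge> 0" by (simp add: subst_matrix_def)

lemma count_sw: "w \<in> subst_word \<theta> u \<Longrightarrow> real (count_list w b) = (\<Sum>c\<in>UNIV. real (count_list u c) * M b c)"
proof (induction u arbitrary: w)
  case Nil then show ?case by simp
next
  case (Cons a u)
  then obtain x y where w: "w = x @ y" "x \<in> \<theta> a" "y \<in> subst_word \<theta> u" by auto
  have "real (count_list w b) = M b a + (\<Sum>c\<in>UNIV. real (count_list u c) * M b c)"
    using Cons.IH[OF w(3)] count_th[OF w(2)] w(1) by simp
  also have "\<dots> = (\<Sum>c\<in>UNIV. real (count_list (a # u) c) * M b c)"
    by (simp only: sum_count_Cons)
  finally show ?case .
qed

lemma count_spw: "w \<in> subst_pow_word \<theta> m u \<Longrightarrow> real (count_list w b) = (\<Sum>c\<in>UNIV. real (count_list u c) * P m b c)"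
proof (induction m arbitrary: u w b)
  case 0 then show ?case by (simp add: sum_deltas)
next
  case (Suc m)
  then obtain v where v: "v \<in> subst_word \<theta> u" "w \<in> subst_pow_word \<theta> m v" by (auto simp: spw_Suc)
  have "real (count_list w b) = (\<Sum>c\<in>UNIV. real (count_list v c) * P m b c)" using Suc.IH[OF v(2)] .
  also have "\<dots> = (\<Sum>c\<in>UNIV. (\<Sum>d\<in>UNIV. real (count_list u d) * M c d) * P m b c)"
    using count_sw[OF v(1)] by simp
  also have "\<dots> = (\<Sum>d\<in>UNIV. real (count_list u d) * (\<Sum>c\<in>UNIV. P m b c * M c d))"
  proof -
    have "(\<Sum>c\<in>UNIV. (\<Sum>d\<in>UNIV. real (count_list u d) * M c d) * P m b c)
        = (\<Sum>c\<in>UNIV. \<Sum>d\<in>UNIV. real (count_list u d) * (P m b c * M c d))"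
      unfolding sum_distrib_right by (simp add: mult_ac)
    also have "\<dots> = (\<Sum>d\<in>UNIV. \<Sum>c\<in>UNIV. real (count_list u d) * (P m b c * M c d))"
      by (rule sum.swap)
    also have "\<dots> = (\<Sum>d\<in>UNIV. real (count_list u d) * (\<Sum>c\<in>UNIV. P m b c * M c d))"
      by (simp add: sum_distrib_left)
    finally show ?thesis .
  qed
  finally show ?case by simp
qed

lemma length_sum: "real (length w) = (\<Sum>b\<in>(UNIV::'a set). real (count_list w b))"
  using sum_count_set[of w "UNIV::'a set"] by (simp flip: of_nat_sum)

lemma length_spw: "w \<in> subst_pow_word \<theta> m u \<Longrightarrow> real (length w) = (\<Sum>b\<in>UNIV. \<Sum>c\<in>UNIV. real (count_list u c) * P m b c)"
  by (simp add: length_sum count_spw)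

lemma sw_fin_ne: "finite (subst_word \<theta> u) \<and> subst_word \<theta> u \<noteq> {}"
proof (induction u)
  case Nil then show ?case by simp
next
  case (Cons a u)
  have "subst_word \<theta> (a # u) = conc (\<theta> a) (subst_word \<theta> u)" by (auto simp: conc_def)
  moreover have "conc (\<theta> a) (subst_word \<theta> u) \<noteq> {}"
  proof -
    obtain x y where "x \<in> \<theta> a" "y \<in> subst_word \<theta> u" using Cons th_ne by blast
    then show ?thesis unfolding conc_def by blast
  qed
  ultimately show ?case using Cons th_fin finite_conc by metis
qed

lemma spw_fin_ne: "finite (subst_pow_word \<theta> m u) \<and> subst_pow_word \<theta> m u \<noteq> {}"
proof (induction m arbitrary: u)
  case 0 then show ?case by simp
next
  case (Suc m) then show ?case using sw_fin_ne[of u] by (auto simp: spw_Suc)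
qed

lemma ell_eq: "real (ell \<theta> m a) = (\<Sum>b\<in>UNIV. P m b a)"
proof -
  have "(SOME w. w \<in> subst_pow \<theta> m a) \<in> subst_pow_word \<theta> m [a]"
    using spw_fin_ne[of m "[a]"] by (simp add: subst_pow_def some_in_eq)
  from length_spw[OF this] show ?thesis by (simp add: ell_def sum_count_Cons del: count_list.simps)
qed


abbreviation "Q \<equiv> qv \<theta>"

lemma spw_same_len: "x \<in> subst_pow_word \<theta> m u \<Longrightarrow> x' \<in> subst_pow_word \<theta> m u \<Longrightarrow> length x = length x'"
  using length_spw[of x m u] length_spw[of x' m u] by simp

lemma card_spw_pos: "card (subst_pow_word \<theta> m u) > 0"
  using spw_fin_ne[of m u] by (simp add: card_gt_0_iff)

lemma ln_card_spw: "ln (real (card (subst_pow_word \<theta> m u))) = (\<Sum>c\<in>UNIV. real (count_list u c) * Q m c)"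
proof (induction u)
  case Nil then show ?case by simp
next
  case (Cons a u)
  have "subst_pow_word \<theta> m (a # u) = conc (subst_pow_word \<theta> m [a]) (subst_pow_word \<theta> m u)"
    using spw_append[of \<theta> m "[a]" u] by simp
  then have "card (subst_pow_word \<theta> m (a # u)) = card (subst_pow_word \<theta> m [a]) * card (subst_pow_word \<theta> m u)"
    using card_conc spw_fin_ne spw_same_len by metis
  then have "ln (real (card (subst_pow_word \<theta> m (a # u)))) = Q m a + ln (real (card (subst_pow_word \<theta> m u)))"
    using card_spw_pos[of m "[a]"] card_spw_pos[of m u] by (simp add: ln_mult qv_def subst_pow_def)
  then show ?case by (simp only: Cons sum_count_Cons)
qed

lemma Q_nonneg: "Q m a \<ge> 0"
  using card_spw_pos[of m "[a]"] by (simp add: qv_def subst_pow_def)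

lemma Q0: "Q 0 a = 0" by (simp add: qv_def subst_pow_def)

lemma Q1: "Q 1 a = ln (real (card (\<theta> a)))"
  using spw_Suc_single[of \<theta> 0 a] by (simp add: qv_def)

lemma Q1': "Q (Suc 0) a = ln (real (card (\<theta> a)))"
  using Q1 by simp

definition S where "S m a = (\<Sum>c\<in>UNIV. M c a * Q m c)"

lemma card_spw_th: "v \<in> \<theta> a \<Longrightarrow> real (card (subst_pow_word \<theta> m v)) = exp (S m a)"
proof -
  assume v: "v \<in> \<theta> a"
  have "ln (real (card (subst_pow_word \<theta> m v))) = S m a"
    unfolding ln_card_spw S_def using count_th[OF v] by simp
  then show ?thesis using card_spw_pos[of m v] by (metis exp_ln of_nat_0_less_iff)
qed

lemma fin_UN: "finite (\<Union>v\<in>\<theta> a. subst_pow_word \<theta> m v)"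
  using th_fin spw_fin_ne by blast

lemma Q_lower: "Q (Suc m) a \<ge> S m a"
proof -
  obtain v where v: "v \<in> \<theta> a" using th_ne by blast
  have "card (subst_pow_word \<theta> m v) \<le> card (\<Union>v\<in>\<theta> a. subst_pow_word \<theta> m v)"
    by (rule card_mono[OF fin_UN]) (use v in blast)
  then have "real (card (subst_pow_word \<theta> m v)) \<le> real (card (subst_pow \<theta> (Suc m) a))"
    using spw_Suc_single[of \<theta> m a] by simp
  moreover have "real (card (subst_pow_word \<theta> m v)) = exp (S m a)" by (rule card_spw_th[OF v])
  ultimately have "exp (S m a) \<le> real (card (subst_pow \<theta> (Suc m) a))" by simp
  then show ?thesis unfolding qv_def by (metis exp_gt_zero ln_exp ln_le_cancel_iff order_less_le_trans)
qed

lemma Q_upper: "Q (Suc m) a \<le> Q 1 a + S m a"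
proof -
  have "real (card (\<Union>v\<in>\<theta> a. subst_pow_word \<theta> m v)) \<le> (\<Sum>v\<in>\<theta> a. real (card (subst_pow_word \<theta> m v)))"
    using card_UN_le[OF th_fin, where A="\<lambda>v. subst_pow_word \<theta> m v"] by (simp flip: of_nat_sum)
  also have "\<dots> = real (card (\<theta> a)) * exp (S m a)" using card_spw_th by simp
  finally have le: "real (card (subst_pow \<theta> (Suc m) a)) \<le> real (card (\<theta> a)) * exp (S m a)"
    using spw_Suc_single[of \<theta> m a] by simp
  have pos: "real (card (subst_pow \<theta> (Suc m) a)) > 0" using card_spw_pos by (simp add: subst_pow_def)
  have pos2: "real (card (\<theta> a)) > 0" using th_fin th_ne by (simp add: card_gt_0_iff)
  have "Q (Suc m) a \<le> ln (real (card (\<theta> a)) * exp (S m a))"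
    unfolding qv_def using le pos by simp
  also have "\<dots> = Q 1 a + S m a" using pos2 by (simp add: ln_mult Q1')
  finally show ?thesis .
qed

lemma Q_ISC:
  assumes "identical_set_condition \<theta>" "m \<ge> 1"
  shows "Q (Suc m) a = S m a"
proof -
  obtain v where v: "v \<in> \<theta> a" using th_ne by blast
  have "(\<Union>v\<in>\<theta> a. subst_pow_word \<theta> m v) = subst_pow_word \<theta> m v"
    using assms v unfolding identical_set_condition_def by blast
  then show ?thesis using card_spw_th[OF v] spw_Suc_single[of \<theta> m a] by (simp add: qv_def)
qed

lemma Q_DSC:
  assumes "disjoint_set_condition \<theta>"
  shows "Q (Suc m) a = Q 1 a + S m a"
proof (cases "m = 0")
  case True then show ?thesis by (simp add: S_def Q0)
next
  case False
  have "real (card (\<Union>v\<in>\<theta> a. subst_pow_word \<theta> m v)) = (\<Sum>v\<in>\<theta> a. real (card (subst_pow_word \<theta> m v)))"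
    using card_UN_disjoint[OF th_fin, where A="\<lambda>v. subst_pow_word \<theta> m v"] assms False spw_fin_ne
    unfolding disjoint_set_condition_def by (simp flip: of_nat_sum)
  also have "\<dots> = real (card (\<theta> a)) * exp (S m a)" using card_spw_th by simp
  finally have e: "real (card (subst_pow \<theta> (Suc m) a)) = real (card (\<theta> a)) * exp (S m a)"
    using spw_Suc_single[of \<theta> m a] by simp
  have pos2: "real (card (\<theta> a)) > 0" using th_fin th_ne by (simp add: card_gt_0_iff)
  show ?thesis unfolding qv_def e using pos2 by (simp add: ln_mult Q1'[unfolded qv_def])
qed


lemma P_add: "P (a + b) i j = (\<Sum>l\<in>UNIV. P a i l * P b l j)"
proof (induction b arbitrary: j)
  case 0 then show ?case by (simp add: sum_deltas)
next
  case (Suc b)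
  have "P (a + Suc b) i j = (\<Sum>m\<in>UNIV. P (a + b) i m * M m j)" by simp
  also have "\<dots> = (\<Sum>m\<in>UNIV. \<Sum>l\<in>UNIV. P a i l * (P b l m * M m j))"
    unfolding Suc sum_distrib_right by (simp add: mult_ac)
  also have "\<dots> = (\<Sum>l\<in>UNIV. \<Sum>m\<in>UNIV. P a i l * (P b l m * M m j))" by (rule sum.swap)
  also have "\<dots> = (\<Sum>l\<in>UNIV. P a i l * P (Suc b) l j)" by (simp add: sum_distrib_left)
  finally show ?case .
qed

lemma P_1: "P (Suc 0) i j = M i j" by (simp add: sum_deltas)

lemma P_Suc_left: "P (Suc k) i j = (\<Sum>l\<in>UNIV. M i l * P k l j)"
  using P_add[of 1 k i j] by (simp add: P_1 del: mat_pow.simps)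

lemma P_nonneg: "P k i j \<ge> 0"
  by (induction k arbitrary: i j) (auto intro!: sum_nonneg mult_nonneg_nonneg M_nonneg)

lemma R_pos: "R i > 0" using pf by (simp add: PF_right_def)
lemma R_eig: "(\<Sum>j\<in>UNIV. M i j * R j) = lam * R i" using pf by (simp add: PF_right_def)
lemma R_ne: "R i \<noteq> 0" using R_pos[of i] by simp
lemma R_sum: "(\<Sum>i\<in>UNIV. R i) = 1" using pf by (simp add: PF_right_def)

lemma P_eig: "(\<Sum>l\<in>UNIV. P k c l * R l) = lam ^ k * R c"
proof (induction k arbitrary: c)
  case 0 then show ?case by (simp add: sum_deltas)
next
  case (Suc k)
  have "(\<Sum>l\<in>UNIV. P (Suc k) c l * R l) = (\<Sum>l\<in>UNIV. \<Sum>m\<in>UNIV. P k c m * (M m l * R l))"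
    unfolding mat_pow.simps sum_distrib_right by (simp add: mult_ac)
  also have "\<dots> = (\<Sum>m\<in>UNIV. \<Sum>l\<in>UNIV. P k c m * (M m l * R l))" by (rule sum.swap)
  also have "\<dots> = (\<Sum>m\<in>UNIV. P k c m * (lam * R m))" by (simp add: sum_distrib_left[symmetric] R_eig)
  also have "\<dots> = lam * (\<Sum>m\<in>UNIV. P k c m * R m)" by (simp add: sum_distrib_left mult_ac)
  finally show ?case by (simp add: Suc)
qed

lemma colsum: "u \<in> \<theta> j \<Longrightarrow> (\<Sum>i\<in>UNIV. M i j) = real (length u)"
  by (simp add: length_sum count_th)

lemma colsum_ge1: "(\<Sum>i\<in>UNIV. M i j) \<ge> 1"
proof -
  obtain u where u: "u \<in> \<theta> j" using th_ne by blast
  then have "length u \<ge> 1" using th_nonnil[OF u] by (cases u) auto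
  then show ?thesis using colsum[OF u] by simp
qed

lemma lam_eq: "lam = (\<Sum>j\<in>UNIV. (\<Sum>i\<in>UNIV. M i j) * R j)"
proof -
  have "lam = (\<Sum>i\<in>UNIV. lam * R i)" by (simp add: sum_distrib_left[symmetric] R_sum)
  also have "\<dots> = (\<Sum>i\<in>UNIV. \<Sum>j\<in>UNIV. M i j * R j)" by (simp add: R_eig)
  also have "\<dots> = (\<Sum>j\<in>UNIV. \<Sum>i\<in>UNIV. M i j * R j)" by (rule sum.swap)
  also have "\<dots> = (\<Sum>j\<in>UNIV. (\<Sum>i\<in>UNIV. M i j) * R j)" by (simp add: sum_distrib_right)
  finally show ?thesis .
qed

lemma lam_ge1: "lam \<ge> 1"
proof -
  have "(\<Sum>j\<in>UNIV. R j) \<le> (\<Sum>j\<in>UNIV. (\<Sum>i\<in>UNIV. M i j) * R j)"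
    by (rule sum_mono) (use colsum_ge1 R_pos in \<open>simp add: less_imp_le\<close>)
  then show ?thesis using lam_eq R_sum by simp
qed

lemma lam_pos: "lam > 0" using lam_ge1 by simp

lemma lam1_Q1: assumes "lam = 1" shows "Q 1 a = 0"
proof -
  have "(\<Sum>j\<in>UNIV. ((\<Sum>i\<in>UNIV. M i j) - 1) * R j) = lam - 1"
    using lam_eq R_sum by (simp add: left_diff_distrib sum_subtractf)
  then have "(\<Sum>j\<in>UNIV. ((\<Sum>i\<in>UNIV. M i j) - 1) * R j) = 0" using assms by simp
  moreover have "\<forall>j\<in>UNIV. ((\<Sum>i\<in>UNIV. M i j) - 1) * R j \<ge> 0"
    using colsum_ge1 R_pos by (simp add: less_imp_le)
  ultimately have "((\<Sum>i\<in>UNIV. M i a) - 1) * R a = 0"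
    using sum_nonneg_eq_0_iff[of UNIV "\<lambda>j. ((\<Sum>i\<in>UNIV. M i j) - 1) * R j"] by simp
  then have cs: "(\<Sum>i\<in>UNIV. M i a) = 1" using R_pos[of a] by simp
  have len1: "length u = 1" if "u \<in> \<theta> a" for u using colsum[OF that] cs by simp
  obtain u where u: "u \<in> \<theta> a" using th_ne by blast
  have "\<theta> a = {u}"
  proof (intro equalityI subsetI)
    fix v assume v: "v \<in> \<theta> a"
    obtain x where x: "u = [x]" using len1[OF u] by (cases u) auto
    obtain y where y: "v = [y]" using len1[OF v] by (cases v) auto
    have "real (count_list v x) = real (count_list u x)" using count_th[OF u, of x] count_th[OF v, of x] by simp
    then have "count_list v x = count_list u x" by (simp only: of_nat_eq_iff)
    then show "v \<in> {u}" using x y by (auto split: if_splits)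
  qed (use u in auto)
  then show ?thesis by (simp add: Q1')
qed

lemma mixsum: "(\<Sum>c\<in>UNIV. M c a * (\<Sum>d\<in>UNIV. f d * P t d c)) = (\<Sum>d\<in>UNIV. f d * P (Suc t) d a)"
proof -
  have "(\<Sum>c\<in>UNIV. M c a * (\<Sum>d\<in>UNIV. f d * P t d c)) = (\<Sum>c\<in>UNIV. \<Sum>d\<in>UNIV. f d * (P t d c * M c a))"
    by (simp add: sum_distrib_left mult_ac)
  also have "\<dots> = (\<Sum>d\<in>UNIV. \<Sum>c\<in>UNIV. f d * (P t d c * M c a))" by (rule sum.swap)
  also have "\<dots> = (\<Sum>d\<in>UNIV. f d * P (Suc t) d a)" by (simp add: sum_distrib_left)
  finally show ?thesis .
qed

lemma Q_lower_iter: "Q (r + t) a \<ge> (\<Sum>c\<in>UNIV. Q r c * P t c a)"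
proof (induction t arbitrary: a)
  case 0 then show ?case by (simp add: sum_deltas)
next
  case (Suc t)
  have "(\<Sum>c\<in>UNIV. Q r c * P (Suc t) c a) = (\<Sum>c\<in>UNIV. M c a * (\<Sum>d\<in>UNIV. Q r d * P t d c))"
    by (simp only: mixsum)
  also have "\<dots> \<le> S (r + t) a" unfolding S_def
    by (rule sum_mono, rule mult_left_mono) (use Suc M_nonneg in auto)
  also have "\<dots> \<le> Q (r + Suc t) a" using Q_lower[of "r + t" a] by simp
  finally show ?case .
qed

lemma Q_ISC_iter: assumes "identical_set_condition \<theta>"
  shows "Q (Suc t) a = (\<Sum>c\<in>UNIV. Q 1 c * P t c a)"
proof (induction t arbitrary: a)
  case 0 then show ?case by (simp add: sum_deltas)
next
  case (Suc t)
  have "(\<Sum>c\<in>UNIV. Q 1 c * P (Suc t) c a) = (\<Sum>c\<in>UNIV. M c a * (\<Sum>d\<in>UNIV. Q 1 d * P t d c))"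
    by (simp only: mixsum)
  also have "\<dots> = S (Suc t) a" unfolding S_def using Suc by simp
  also have "\<dots> = Q (Suc (Suc t)) a" using Q_ISC[OF assms, of "Suc t" a] by simp
  finally show ?case by simp
qed

definition U where "U t a = (\<Sum>s<t. \<Sum>c\<in>UNIV. Q 1 c * P s c a)"

lemma U_Suc: "U (Suc t) a = Q 1 a + (\<Sum>c\<in>UNIV. M c a * U t c)"
proof -
  have "U (Suc t) a = (\<Sum>c\<in>UNIV. Q 1 c * P 0 c a) + (\<Sum>s<t. \<Sum>c\<in>UNIV. Q 1 c * P (Suc s) c a)"
    unfolding U_def by (rule sum.lessThan_Suc_shift)
  also have "(\<Sum>c\<in>UNIV. Q 1 c * P 0 c a) = Q 1 a" by (simp add: sum_deltas)
  also have "(\<Sum>s<t. \<Sum>c\<in>UNIV. Q 1 c * P (Suc s) c a) = (\<Sum>s<t. \<Sum>c\<in>UNIV. M c a * (\<Sum>d\<in>UNIV. Q 1 d * P s d c))"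
    by (simp only: mixsum)
  also have "\<dots> = (\<Sum>c\<in>UNIV. M c a * U t c)"
    unfolding U_def sum_distrib_left by (rule sum.swap)
  finally show ?thesis .
qed

lemma Q_upper_iter: "Q t a \<le> U t a"
proof (induction t arbitrary: a)
  case 0 then show ?case by (simp add: Q0 U_def)
next
  case (Suc t)
  have "Q (Suc t) a \<le> Q 1 a + S t a" by (rule Q_upper)
  also have "S t a \<le> (\<Sum>c\<in>UNIV. M c a * U t c)" unfolding S_def
    by (rule sum_mono, rule mult_left_mono) (use Suc M_nonneg in auto)
  finally show ?case by (simp add: U_Suc)
qed

lemma Q_DSC_iter: assumes "disjoint_set_condition \<theta>" shows "Q t a = U t a"
proof (induction t arbitrary: a)
  case 0 then show ?case by (simp add: Q0 U_def)
next
  case (Suc t)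
  have "Q (Suc t) a = Q 1 a + S t a" by (rule Q_DSC[OF assms])
  also have "S t a = (\<Sum>c\<in>UNIV. M c a * U t c)" unfolding S_def using Suc by simp
  finally show ?case by (simp only: U_Suc)
qed

definition QR where "QR r = (\<Sum>a\<in>UNIV. Q r a * R a)"

lemma QR_step: "QR (Suc r) \<ge> lam * QR r"
proof -
  have "lam * QR r = (\<Sum>c\<in>UNIV. Q r c * (lam * R c))"
    unfolding QR_def by (simp add: sum_distrib_left mult_ac)
  also have "\<dots> = (\<Sum>c\<in>UNIV. Q r c * (\<Sum>a\<in>UNIV. M c a * R a))"
    by (simp only: R_eig)
  also have "\<dots> = (\<Sum>a\<in>UNIV. \<Sum>c\<in>UNIV. Q r c * (M c a * R a))"
    unfolding sum_distrib_left by (rule sum.swap)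
  also have "\<dots> = (\<Sum>a\<in>UNIV. S r a * R a)" unfolding S_def sum_distrib_right by (simp add: mult_ac)
  also have "\<dots> \<le> QR (Suc r)" unfolding QR_def
    by (rule sum_mono, rule mult_right_mono) (use Q_lower R_pos in \<open>auto simp: less_imp_le\<close>)
  finally show ?thesis .
qed

lemma QR_mono: "r \<le> s \<Longrightarrow> QR r / lam ^ r \<le> QR s / lam ^ s"
proof -
  have "QR n / lam ^ n \<le> QR (Suc n) / lam ^ Suc n" for n
    using QR_step[of n] lam_pos by (simp add: field_simps)
  then have "mono (\<lambda>n. QR n / lam ^ n)" by (rule incseq_SucI)
  then show "r \<le> s \<Longrightarrow> QR r / lam ^ r \<le> QR s / lam ^ s" by (simp add: mono_def)
qed


lemma ell_pos: "real (ell \<theta> m a) \<ge> 1"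
proof (induction m arbitrary: a)
  case 0 then show ?case by (simp add: ell_eq sum_deltas)
next
  case (Suc m)
  have "(\<Sum>b\<in>UNIV. P (Suc m) b a) = (\<Sum>l\<in>UNIV. \<Sum>b\<in>UNIV. P m b l * M l a)"
    unfolding mat_pow.simps by (rule sum.swap)
  also have "\<dots> = (\<Sum>l\<in>UNIV. real (ell \<theta> m l) * M l a)" by (simp add: ell_eq sum_distrib_right)
  also have "\<dots> \<ge> (\<Sum>l\<in>UNIV. M l a)"
  proof (rule sum_mono)
    fix l
    have "1 * M l a \<le> real (ell \<theta> m l) * M l a" by (rule mult_right_mono[OF Suc.IH M_nonneg])
    then show "M l a \<le> real (ell \<theta> m l) * M l a" by simp
  qed
  finally show ?case using colsum_ge1[of a] by (simp add: ell_eq)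
qed

definition W where "W k c l = P k c l * R l / (lam ^ k * R c)"

lemma W_nonneg: "W k c l \<ge> 0" unfolding W_def using P_nonneg R_pos lam_pos
  by (simp add: less_imp_le)

lemma W_sum: "(\<Sum>l\<in>UNIV. W k c l) = 1"
proof -
  have "(\<Sum>l\<in>UNIV. W k c l) = (\<Sum>l\<in>UNIV. P k c l * R l) / (lam ^ k * R c)"
    unfolding W_def by (simp add: sum_divide_distrib)
  then show ?thesis using P_eig[of k c] R_pos[of c] lam_pos by simp
qed

definition y where "y i t c = P t c i / (lam ^ t * R c)"

lemma y_step: "y i (k + t) c = (\<Sum>l\<in>UNIV. W k c l * y i t l)"
proof -
  have "y i (k + t) c = (\<Sum>l\<in>UNIV. P k c l * P t l i) / (lam ^ (k + t) * R c)"
    unfolding y_def P_add ..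
  also have "\<dots> = (\<Sum>l\<in>UNIV. P k c l * P t l i / (lam ^ (k + t) * R c))" by (simp add: sum_divide_distrib)
  also have "\<dots> = (\<Sum>l\<in>UNIV. W k c l * y i t l)"
  proof (rule sum.cong[OF refl])
    fix l
    show "P k c l * P t l i / (lam ^ (k + t) * R c) = W k c l * y i t l"
      unfolding W_def y_def using R_pos[of l] R_pos[of c] lam_pos by (simp add: power_add field_simps)
  qed
  finally show ?thesis .
qed

definition mx where "mx i t = Max (range (y i t))"
definition mn where "mn i t = Min (range (y i t))"

lemma mn_le_y: "mn i t \<le> y i t c" unfolding mn_def by simp
lemma y_le_mx: "y i t c \<le> mx i t" unfolding mx_def by simp

lemma mx_step: "mx i (k + t) \<le> mx i t"
proof -
  have "y i (k + t) c \<le> mx i t" for c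
    using y_step[of i k t c] stoch_bounds(2)[of "W k c" "y i t"] W_nonneg W_sum by (simp add: mx_def)
  then show ?thesis unfolding mx_def[of i "k + t"] by (simp add: Max_le_iff)
qed

lemma mn_step: "mn i t \<le> mn i (k + t)"
proof -
  have "mn i t \<le> y i (k + t) c" for c
    using y_step[of i k t c] stoch_bounds(1)[of "W k c" "y i t"] W_nonneg W_sum by (simp add: mn_def)
  then show ?thesis unfolding mn_def[of i "k + t"] by (simp add: Min_ge_iff)
qed

lemma mx_dec: "decseq (mx i)"
  by (rule decseq_SucI) (metis mx_step plus_1_eq_Suc)

lemma mn_inc: "incseq (mn i)"
  by (rule incseq_SucI) (metis mn_step plus_1_eq_Suc)

lemma mn_le_mx: "mn i t \<le> mx i t" using mn_le_y y_le_mx order_trans by blast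


definition kk where "kk = (SOME k. k \<ge> 1 \<and> (\<forall>i j. P k i j > 0))"

lemma kk: "kk \<ge> 1" "P kk i j > 0"
proof -
  have "\<exists>k. k \<ge> 1 \<and> (\<forall>i j. P k i j > 0)" using prim
    unfolding primitive_subst_def primitive_matrix_def by blast
  then have "kk \<ge> 1 \<and> (\<forall>i j. P kk i j > 0)" unfolding kk_def by (rule someI_ex)
  then show "kk \<ge> 1" "P kk i j > 0" by auto
qed

definition eps where "eps = Min (range (\<lambda>(c, l). W kk c l))"

lemma eps_le: "eps \<le> W kk c l"
proof -
  have "(\<lambda>(c, l). W kk c l) (c, l) \<in> range (\<lambda>(c, l). W kk c l)" by blast
  then show ?thesis unfolding eps_def by (metis (mono_tags, lifting) Min_le finite_UNIV finite_imageI case_prod_conv)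
qed

lemma W_kk_pos: "W kk c l > 0"
  unfolding W_def using kk(2)[of c l] R_pos[of l] R_pos[of c] lam_pos by simp

lemma eps_pos: "eps > 0"
proof -
  have "eps \<in> range (\<lambda>(c, l). W kk c l)" unfolding eps_def by (rule Min_in) auto
  then show ?thesis using W_kk_pos by auto
qed

lemma osc_step: "mx i (kk + t) - mn i (kk + t) \<le> (1 - eps) * (mx i t - mn i t)"
proof -
  have "y i (kk + t) c \<le> eps * mn i t + (1 - eps) * mx i t" for c
    using y_step[of i kk t c] stoch_contract[where W="W kk c" and \<epsilon>=eps and y="y i t"] eps_le eps_pos W_sum
    by (simp add: mx_def mn_def less_imp_le)
  then have "mx i (kk + t) \<le> eps * mn i t + (1 - eps) * mx i t"
    unfolding mx_def[of i "kk + t"] by (simp add: Max_le_iff)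
  moreover have "mn i t \<le> mn i (kk + t)" by (rule mn_step)
  ultimately show ?thesis by (simp add: algebra_simps)
qed

lemma y_lim: "\<exists>g>0. \<forall>c. (\<lambda>t. y i t c) \<longlonglongrightarrow> g"
proof -
  have bA: "bdd_above (range (mn i))"
  proof (rule bdd_aboveI[of _ "mx i 0"])
    fix x assume "x \<in> range (mn i)"
    then obtain t where "x = mn i t" by blast
    moreover have "mx i t \<le> mx i 0" using mx_dec by (simp add: decseq_def)
    ultimately show "x \<le> mx i 0" using mn_le_mx[of i t] by simp
  qed
  have bB: "bdd_below (range (mx i))"
  proof (rule bdd_belowI[of _ "mn i 0"])
    fix x assume "x \<in> range (mx i)"
    then obtain t where "x = mx i t" by blast
    moreover have "mn i 0 \<le> mn i t" using mn_inc by (simp add: incseq_def)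
    ultimately show "mn i 0 \<le> x" using mn_le_mx[of i t] by simp
  qed
  define A where "A = (SUP t. mn i t)"
  define B where "B = (INF t. mx i t)"
  have LA: "mn i \<longlonglongrightarrow> A" unfolding A_def by (rule LIMSEQ_incseq_SUP[OF bA mn_inc])
  have LB: "mx i \<longlonglongrightarrow> B" unfolding B_def by (rule LIMSEQ_decseq_INF[OF bB mx_dec])
  have AB: "A \<le> B" by (rule LIMSEQ_le[OF LA LB]) (use mn_le_mx in auto)
  have osc: "(\<lambda>t. mx i t - mn i t) \<longlonglongrightarrow> B - A" by (intro tendsto_diff LB LA)
  have osc2: "(\<lambda>t. mx i (t + kk) - mn i (t + kk)) \<longlonglongrightarrow> B - A"
    using LIMSEQ_ignore_initial_segment[OF osc, of kk] .
  have osc3: "(\<lambda>t. (1 - eps) * (mx i t - mn i t)) \<longlonglongrightarrow> (1 - eps) * (B - A)"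
    by (intro tendsto_mult_left osc)
  have "B - A \<le> (1 - eps) * (B - A)"
    by (rule LIMSEQ_le[OF osc2 osc3]) (use osc_step in \<open>auto simp: add.commute\<close>)
  then have "eps * (B - A) \<le> 0" by (simp add: algebra_simps)
  then have "B - A \<le> 0" using eps_pos by (simp add: mult_le_0_iff)
  then have AB2: "A = B" using AB by simp
  have conv: "(\<lambda>t. y i t c) \<longlonglongrightarrow> A" for c
    by (rule tendsto_sandwich[OF _ _ LA LB[folded AB2]]) (auto simp: mn_le_y y_le_mx)
  have "y i kk c > 0" for c unfolding y_def using kk(2)[of c i] R_pos[of c] lam_pos by simp
  then have "mn i kk > 0" unfolding mn_def by (simp add: Min_gr_iff)
  moreover have "mn i kk \<le> A" by (rule incseq_le[OF mn_inc LA])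
  ultimately show ?thesis using conv by (intro exI[of _ A]) auto
qed

definition gam where "gam i = (SOME g. g > 0 \<and> (\<forall>c. (\<lambda>t. y i t c) \<longlonglongrightarrow> g))"

lemma gam: "gam i > 0" "(\<lambda>t. y i t c) \<longlonglongrightarrow> gam i"
proof -
  have "gam i > 0 \<and> (\<forall>c. (\<lambda>t. y i t c) \<longlonglongrightarrow> gam i)"
    unfolding gam_def using y_lim[of i] by (rule someI_ex[where P="\<lambda>g. g > 0 \<and> (\<forall>c. (\<lambda>t. y i t c) \<longlonglongrightarrow> g)"])
  then show "gam i > 0" "(\<lambda>t. y i t c) \<longlonglongrightarrow> gam i" by auto
qed

lemma vec_lim: "(\<lambda>t. (\<Sum>c\<in>UNIV. v c * P t c i) / lam ^ t) \<longlonglongrightarrow> gam i * (\<Sum>c\<in>UNIV. v c * R c)"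
proof -
  have e: "(\<Sum>c\<in>UNIV. v c * P t c i) / lam ^ t = (\<Sum>c\<in>UNIV. v c * R c * y i t c)" for t
    unfolding sum_divide_distrib
    by (rule sum.cong[OF refl]) (use R_pos lam_pos in \<open>simp add: y_def field_simps R_ne\<close>)
  have "(\<lambda>t. \<Sum>c\<in>UNIV. v c * R c * y i t c) \<longlonglongrightarrow> (\<Sum>c\<in>UNIV. v c * R c * gam i)"
    by (intro tendsto_sum tendsto_mult_left gam(2))
  then show ?thesis unfolding e by (simp add: sum_distrib_left mult_ac)
qed

lemma ell_lim: "(\<lambda>t. real (ell \<theta> t i) / lam ^ t) \<longlonglongrightarrow> gam i"
  using vec_lim[of "\<lambda>_. 1" i] by (simp add: ell_eq R_sum)


lemma ell_pos': "real (ell \<theta> m a) > 0" using ell_pos[of m a] by simp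

lemma low_lim: "(\<lambda>t. (\<Sum>c\<in>UNIV. Q r c * P t c i) / real (ell \<theta> (t + r) i)) \<longlonglongrightarrow> QR r / lam ^ r"
proof -
  have num: "(\<lambda>t. (\<Sum>c\<in>UNIV. Q r c * P t c i) / lam ^ t) \<longlonglongrightarrow> gam i * QR r"
    using vec_lim[of "Q r" i] by (simp add: QR_def)
  have den: "(\<lambda>t. lam ^ r * (real (ell \<theta> (t + r) i) / lam ^ (t + r))) \<longlonglongrightarrow> lam ^ r * gam i"
    by (intro tendsto_mult_left LIMSEQ_ignore_initial_segment[OF ell_lim])
  have "(\<lambda>t. ((\<Sum>c\<in>UNIV. Q r c * P t c i) / lam ^ t) / (lam ^ r * (real (ell \<theta> (t + r) i) / lam ^ (t + r))))
      \<longlonglongrightarrow> (gam i * QR r) / (lam ^ r * gam i)"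
    by (rule tendsto_divide[OF num den]) (use gam(1)[of i] lam_pos in simp)
  moreover have "((\<Sum>c\<in>UNIV. Q r c * P t c i) / lam ^ t) / (lam ^ r * (real (ell \<theta> (t + r) i) / lam ^ (t + r)))
      = (\<Sum>c\<in>UNIV. Q r c * P t c i) / real (ell \<theta> (t + r) i)" for t
    using lam_pos ell_pos'[of "t + r" i] by (simp add: power_add field_simps)
  moreover have "(gam i * QR r) / (lam ^ r * gam i) = QR r / lam ^ r" using gam(1)[of i] by simp
  ultimately show ?thesis by simp
qed

lemma U_zero: assumes "lam = 1" shows "U m a = 0"
  unfolding U_def using lam1_Q1[OF assms] by simp

lemma up_lim: "(\<lambda>m. U m i / real (ell \<theta> m i)) \<longlonglongrightarrow> QR 1 / (lam - 1)"
proof (cases "lam = 1")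
  case True
  then show ?thesis by (simp add: U_zero)
next
  case False
  then have lam1: "lam > 1" using lam_ge1 by simp
  define z where "z s = (\<Sum>c\<in>UNIV. Q 1 c * P s c i) / lam ^ s" for s
  have zl: "z \<longlonglongrightarrow> gam i * QR 1" unfolding z_def using vec_lim[of "Q 1" i] by (simp add: QR_def)
  have Ue: "U m i = (\<Sum>s<m. z s * lam ^ s)" for m
    unfolding U_def z_def using lam_pos by simp
  have num: "(\<lambda>m. U m i / lam ^ m) \<longlonglongrightarrow> gam i * QR 1 / (lam - 1)"
    unfolding Ue by (rule geom_weighted[OF zl lam1])
  have "(\<lambda>m. (U m i / lam ^ m) / (real (ell \<theta> m i) / lam ^ m)) \<longlonglongrightarrow> (gam i * QR 1 / (lam - 1)) / gam i"
    by (rule tendsto_divide[OF num ell_lim]) (use gam(1)[of i] in simp)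
  moreover have "(gam i * QR 1 / (lam - 1)) / gam i = QR 1 / (lam - 1)" using gam(1)[of i] by simp
  ultimately have lim: "(\<lambda>m. (U m i / lam ^ m) / (real (ell \<theta> m i) / lam ^ m)) \<longlonglongrightarrow> QR 1 / (lam - 1)"
    by simp
  have eq: "(U m i / lam ^ m) / (real (ell \<theta> m i) / lam ^ m) = U m i / real (ell \<theta> m i)" for m
    using lam_pos ell_pos'[of m i] by (simp add: field_simps)
  show ?thesis using lim unfolding eq .
qed

abbreviation "fseq i m \<equiv> ereal (Q m i / real (ell \<theta> m i))"

lemma low_bound: "ereal (QR r / lam ^ r) \<le> lower_infl_entropy \<theta> i"
proof -
  define h where "h m = (\<Sum>c\<in>UNIV. Q r c * P (m - r) c i) / real (ell \<theta> m i)" for m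
  have "(\<lambda>t. h (t + r)) \<longlonglongrightarrow> QR r / lam ^ r" unfolding h_def using low_lim[of r i] by simp
  then have "h \<longlonglongrightarrow> QR r / lam ^ r" by (rule LIMSEQ_offset)
  then have "(\<lambda>m. ereal (h m)) \<longlonglongrightarrow> ereal (QR r / lam ^ r)" by (rule tendsto_ereal)
  then have L: "liminf (\<lambda>m. ereal (h m)) = ereal (QR r / lam ^ r)"
    by (rule lim_imp_Liminf[OF trivial_limit_sequentially])
  have "eventually (\<lambda>m. ereal (h m) \<le> fseq i m) sequentially"
    unfolding eventually_sequentially
  proof (intro exI allI impI)
    fix m assume m: "m \<ge> r"
    have "(\<Sum>c\<in>UNIV. Q r c * P (m - r) c i) \<le> Q m i" using Q_lower_iter[of r "m - r" i] m by simp
    then have "h m \<le> Q m i / real (ell \<theta> m i)" unfolding h_def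
      by (rule divide_right_mono) (use ell_pos'[of m i] in simp)
    then show "ereal (h m) \<le> fseq i m" by simp
  qed
  then have "liminf (\<lambda>m. ereal (h m)) \<le> liminf (fseq i)" by (rule Liminf_mono)
  then show ?thesis unfolding L lower_infl_entropy_def .
qed

lemma up_bound: "upper_infl_entropy \<theta> i \<le> ereal (QR 1 / (lam - 1))"
proof -
  have L: "limsup (\<lambda>m. ereal (U m i / real (ell \<theta> m i))) = ereal (QR 1 / (lam - 1))"
    by (rule lim_imp_Limsup[OF trivial_limit_sequentially tendsto_ereal[OF up_lim]])
  have "eventually (\<lambda>m. fseq i m \<le> ereal (U m i / real (ell \<theta> m i))) sequentially"
  proof (rule always_eventually, rule allI)
    fix m
    have "Q m i / real (ell \<theta> m i) \<le> U m i / real (ell \<theta> m i)"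
      by (rule divide_right_mono[OF Q_upper_iter]) (use ell_pos'[of m i] in simp)
    then show "fseq i m \<le> ereal (U m i / real (ell \<theta> m i))" by simp
  qed
  then have "limsup (fseq i) \<le> limsup (\<lambda>m. ereal (U m i / real (ell \<theta> m i)))" by (rule Limsup_mono)
  then show ?thesis unfolding L upper_infl_entropy_def .
qed

lemma ISC_eq: assumes "identical_set_condition \<theta>"
  shows "lower_infl_entropy \<theta> i = ereal (QR 1 / lam)"
proof -
  have eq: "(\<Sum>c\<in>UNIV. Q 1 c * P t c i) = Q (t + 1) i" for t
    using Q_ISC_iter[OF assms, of t i] by simp
  have "(\<lambda>t. Q (t + 1) i / real (ell \<theta> (t + 1) i)) \<longlonglongrightarrow> QR 1 / lam ^ 1"
    using low_lim[of 1 i] unfolding eq .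
  then have "(\<lambda>m. Q m i / real (ell \<theta> m i)) \<longlonglongrightarrow> QR 1 / lam ^ 1" by (rule LIMSEQ_offset)
  then have "(\<lambda>m. Q m i / real (ell \<theta> m i)) \<longlonglongrightarrow> QR 1 / lam" by (simp only: power_one_right)
  then show ?thesis unfolding lower_infl_entropy_def
    by (rule lim_imp_Liminf[OF trivial_limit_sequentially tendsto_ereal])
qed

lemma DSC_eq: assumes "disjoint_set_condition \<theta>"
  shows "upper_infl_entropy \<theta> i = ereal (QR 1 / (lam - 1))"
  unfolding upper_infl_entropy_def Q_DSC_iter[OF assms]
  by (rule lim_imp_Limsup[OF trivial_limit_sequentially tendsto_ereal[OF up_lim]])

lemma main_i: "ereal (QR 1 / lam) \<le> lower_infl_entropy \<theta> i
    \<and> lower_infl_entropy \<theta> i \<le> upper_infl_entropy \<theta> i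
    \<and> upper_infl_entropy \<theta> i \<le> ereal (QR 1 / (lam - 1))
    \<and> (identical_set_condition \<theta> \<longrightarrow> lower_infl_entropy \<theta> i = ereal (QR 1 / lam))
    \<and> (disjoint_set_condition \<theta> \<longrightarrow> upper_infl_entropy \<theta> i = ereal (QR 1 / (lam - 1)))
    \<and> (\<forall>r\<ge>1. ereal (QR r / lam ^ r) \<le> lower_infl_entropy \<theta> i)
    \<and> (\<forall>r s. 1 \<le> r \<longrightarrow> r \<le> s \<longrightarrow> QR r / lam ^ r \<le> QR s / lam ^ s)"
proof (intro conjI allI impI)
  show "ereal (QR 1 / lam) \<le> lower_infl_entropy \<theta> i" using low_bound[of 1 i] by (simp only: power_one_right)
  show "lower_infl_entropy \<theta> i \<le> upper_infl_entropy \<theta> i"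
    unfolding lower_infl_entropy_def upper_infl_entropy_def by (rule Liminf_le_Limsup) simp
  show "upper_infl_entropy \<theta> i \<le> ereal (QR 1 / (lam - 1))" by (rule up_bound)
  show "lower_infl_entropy \<theta> i = ereal (QR 1 / lam)" if "identical_set_condition \<theta>" using ISC_eq[OF that] .
  show "upper_infl_entropy \<theta> i = ereal (QR 1 / (lam - 1))" if "disjoint_set_condition \<theta>" using DSC_eq[OF that] .
  show "ereal (QR r / lam ^ r) \<le> lower_infl_entropy \<theta> i" for r by (rule low_bound)
  show "QR r / lam ^ r \<le> QR s / lam ^ s" if "r \<le> s" for r s using QR_mono[OF that] .
qed

end

theorem mainTheorem3:
  fixes \<theta> :: "'a::finite \<Rightarrow> 'a list set" and lam :: real and R :: "'a \<Rightarrow> real"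
  assumes "random_subst \<theta>"
    and "semi_compatible \<theta>"
    and "primitive_subst \<theta>"
    and "PF_right (subst_matrix \<theta>) lam R"
  shows "\<forall>i.
      ereal ((\<Sum>a\<in>UNIV. qv \<theta> 1 a * R a) / lam) \<le> lower_infl_entropy \<theta> i
    \<and> lower_infl_entropy \<theta> i \<le> upper_infl_entropy \<theta> i
    \<and> upper_infl_entropy \<theta> i \<le> ereal ((\<Sum>a\<in>UNIV. qv \<theta> 1 a * R a) / (lam - 1))
    \<and> (identical_set_condition \<theta> \<longrightarrow>
         lower_infl_entropy \<theta> i = ereal ((\<Sum>a\<in>UNIV. qv \<theta> 1 a * R a) / lam))
    \<and> (disjoint_set_condition \<theta> \<longrightarrow>
         upper_infl_entropy \<theta> i = ereal ((\<Sum>a\<in>UNIV. qv \<theta> 1 a * R a) / (lam - 1)))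
    \<and> (\<forall>r\<ge>1. ereal ((\<Sum>a\<in>UNIV. qv \<theta> r a * R a) / lam ^ r) \<le> lower_infl_entropy \<theta> i)
    \<and> (\<forall>r s. 1 \<le> r \<longrightarrow> r \<le> s \<longrightarrow>
         (\<Sum>a\<in>UNIV. qv \<theta> r a * R a) / lam ^ r \<le> (\<Sum>a\<in>UNIV. qv \<theta> s a * R a) / lam ^ s)"
proof -
  interpret rs \<theta> lam R using assms by unfold_locales
  show ?thesis using main_i unfolding QR_def by blast
qed

end
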